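(* Let $R$ and $B$ be $n\times n$ nonnegative matrices that have the same entrywise positive left and right eigenvectors $u$ and $v$ for eigenvalue $1$ (i.e. $Rv=v$, $R^Tu=u$, $Bv=v$, $B^Tu=u$). Then for every nonempty $S\subseteq[n]$, \[ \phi_S(RB)\le\phi_S(R)+\phi_S(B). \]
   Context: For a nonnegative $M$ with $Mv=v$, $M^Tu=u$, $\phi_S(M)=\langle\mathbf 1_S,D_uMD_v\mathbf 1_{\overline S}\rangle/\langle\mathbf 1_S,D_uMD_v\mathbf 1\rangle$, where $D_x$ is the diagonal matrix with $x$ on the diagonal and $\mathbf 1_S$ is the indicator vector of $S$. *)

theory Defs
  imports "HOL-Analysis.Analysis"
begin

definition diag_mat :: "real ^ 'n \<Rightarrow> real ^ 'n ^ 'n" where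
  "diag_mat x = (\<chi> i j. if i = j then x $ i else 0)"

definition indic_vec :: "'n set \<Rightarrow> real ^ 'n" where
  "indic_vec S = (\<chi> i. if i \<in> S then 1 else 0)"

definition nonneg_mat :: "real ^ 'n ^ 'n \<Rightarrow> bool" where
  "nonneg_mat M \<longleftrightarrow> (\<forall>i j. M $ i $ j \<ge> 0)"

definition pos_vec :: "real ^ 'n \<Rightarrow> bool" where
  "pos_vec x \<longleftrightarrow> (\<forall>i. x $ i > 0)"

definition phi :: "real ^ 'n \<Rightarrow> real ^ 'n \<Rightarrow> 'n set \<Rightarrow> real ^ 'n ^ 'n \<Rightarrow> real" where
  "phi u v S M =
     (indic_vec S \<bullet> ((diag_mat u ** M ** diag_mat v) *v indic_vec (- S))) /
     (indic_vec S \<bullet> ((diag_mat u ** M ** diag_mat v) *v indic_vec UNIV))"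

end

theory Submission
  imports Defs
begin

lemma ind_sum: fixes S :: "'a::finite set" shows "(\<Sum>i\<in>UNIV. (if i \<in> S then 1 else 0) * f i) = (sum f S :: real)"
proof -
  have "(\<Sum>i\<in>UNIV. (if i \<in> S then 1 else 0) * f i) = (\<Sum>i\<in>UNIV. if i \<in> S then f i else 0)"
    by (rule sum.cong) auto
  thus ?thesis by (simp add: sum.If_cases)
qed

lemma ind_sum2: fixes S :: "'a::finite set" shows "(\<Sum>i\<in>UNIV. f i * (if i \<in> S then 1 else 0)) = (sum f S :: real)"
  using ind_sum[of S f] by (simp add: mult.commute)

lemma num_eq:
  fixes M :: "real ^ 'n ^ 'n"
  shows "indic_vec S \<bullet> ((diag_mat u ** M ** diag_mat v) *v indic_vec T)
     = (\<Sum>i\<in>S. \<Sum>j\<in>T. u$i * M$i$j * v$j)"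
proof -
  have e: "(diag_mat u ** M ** diag_mat v) $ i $ j = u$i * M$i$j * v$j" for i j
    by (simp add: matrix_matrix_mult_def diag_mat_def if_distrib[where f="\<lambda>x. _ * x"]
        if_distrib[where f="\<lambda>x. x * _"] sum.delta sum.delta' cong: if_cong)
  have "indic_vec S \<bullet> ((diag_mat u ** M ** diag_mat v) *v indic_vec T)
     = (\<Sum>i\<in>UNIV. (if i \<in> S then 1 else 0) * (\<Sum>j\<in>UNIV. (diag_mat u ** M ** diag_mat v) $ i $ j * (if j \<in> T then 1 else 0)))"
    by (simp add: inner_vec_def indic_vec_def matrix_vector_mult_def)
  also have "\<dots> = (\<Sum>i\<in>S. \<Sum>j\<in>T. u$i * M$i$j * v$j)"
    by (simp only: e ind_sum ind_sum2)
  finally show ?thesis .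
qed

lemma den_eq:
  fixes M :: "real ^ 'n ^ 'n"
  assumes "M *v v = v"
  shows "(\<Sum>i\<in>S. \<Sum>j\<in>UNIV. u$i * M$i$j * v$j) = (\<Sum>i\<in>S. u$i * v$i)"
proof (rule sum.cong[OF refl])
  fix i
  have "v$i = (M *v v)$i" using assms by simp
  hence "v$i = (\<Sum>j\<in>UNIV. M$i$j * v$j)" by (simp add: matrix_vector_mult_def)
  thus "(\<Sum>j\<in>UNIV. u$i * M$i$j * v$j) = u$i * v$i"
    by (simp add: sum_distrib_left mult.assoc)
qed

theorem lemma3p12:
  fixes R B :: "real ^ 'n ^ 'n" and u v :: "real ^ 'n" and S :: "'n set"
  assumes "nonneg_mat R" and "nonneg_mat B"
    and "pos_vec u" and "pos_vec v"
    and "R *v v = v" and "transpose R *v u = u"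
    and "B *v v = v" and "transpose B *v u = u"
    and "S \<noteq> {}"
  shows "phi u v S (R ** B) \<le> phi u v S R + phi u v S B"
proof -
  let ?N = "\<lambda>M::real^'n^'n. (\<Sum>i\<in>S. \<Sum>j\<in>-S. u$i * M$i$j * v$j)"
  let ?a = "(\<Sum>i\<in>S. u$i * v$i)"
  have RBv: "(R ** B) *v v = v" using assms(5,7) by (simp add: matrix_vector_mul_assoc[symmetric])
  have apos: "?a > 0"
  proof -
    obtain s where "s \<in> S" using assms(9) by blast
    have "?a \<ge> u$s * v$s" using \<open>s \<in> S\<close> assms(3,4) unfolding pos_vec_def
      by (intro member_le_sum) (auto intro!: mult_nonneg_nonneg less_imp_le)
    moreover have "u$s * v$s > 0" using assms(3,4) unfolding pos_vec_def by simp
    ultimately show ?thesis by linarith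
  qed
  have phiM: "phi u v S M = ?N M / ?a" if "M *v v = v" for M
    unfolding phi_def num_eq den_eq[OF that] by simp
  have u0: "u$i \<ge> 0" for i using assms(3) unfolding pos_vec_def by (simp add: less_imp_le)
  have v0: "v$i \<ge> 0" for i using assms(4) unfolding pos_vec_def by (simp add: less_imp_le)
  have R0: "R$i$k \<ge> 0" for i k using assms(1) unfolding nonneg_mat_def by simp
  have B0: "B$i$k \<ge> 0" for i k using assms(2) unfolding nonneg_mat_def by simp
  define c where "c k = (\<Sum>j\<in>-S. B$k$j * v$j)" for k
  have c0: "c k \<ge> 0" for k unfolding c_def by (intro sum_nonneg) (simp add: B0 v0)
  have cv: "c k \<le> v$k" for k
  proof -
    have "v$k = (B *v v)$k" using assms(7) by simp
    hence "v$k = (\<Sum>j\<in>UNIV. B$k$j * v$j)" by (simp add: matrix_vector_mult_def)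
    moreover have "c k \<le> (\<Sum>j\<in>UNIV. B$k$j * v$j)" unfolding c_def
      by (intro sum_mono2) (auto simp: B0 v0)
    ultimately show ?thesis by simp
  qed
  have uR: "(\<Sum>i\<in>UNIV. u$i * R$i$k) = u$k" for k
  proof -
    have "u$k = (transpose R *v u)$k" using assms(6) by simp
    also have "\<dots> = (\<Sum>i\<in>UNIV. R$i$k * u$i)"
      by (simp add: matrix_vector_mult_def transpose_def)
    finally show ?thesis by (simp add: mult.commute)
  qed
  have NRB: "?N (R ** B) = (\<Sum>i\<in>S. \<Sum>k\<in>UNIV. u$i * R$i$k * c k)"
  proof (rule sum.cong[OF refl])
    fix i
    have "(\<Sum>j\<in>-S. u$i * (R ** B)$i$j * v$j) = (\<Sum>j\<in>-S. \<Sum>k\<in>UNIV. u$i * R$i$k * (B$k$j * v$j))"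
    proof (rule sum.cong[OF refl])
      fix j
      have "u$i * (R ** B)$i$j * v$j = u$i * (\<Sum>k\<in>UNIV. R$i$k * B$k$j) * v$j"
        by (simp add: matrix_matrix_mult_def)
      also have "\<dots> = (\<Sum>k\<in>UNIV. u$i * R$i$k * (B$k$j * v$j))"
        by (simp add: sum_distrib_left sum_distrib_right mult.assoc)
      finally show "u$i * (R ** B)$i$j * v$j = (\<Sum>k\<in>UNIV. u$i * R$i$k * (B$k$j * v$j))" .
    qed
    also have "\<dots> = (\<Sum>k\<in>UNIV. \<Sum>j\<in>-S. u$i * R$i$k * (B$k$j * v$j))"
      by (rule sum.swap)
    also have "\<dots> = (\<Sum>k\<in>UNIV. u$i * R$i$k * c k)"
      by (simp only: c_def sum_distrib_left)
    finally show "(\<Sum>j\<in>-S. u$i * (R ** B)$i$j * v$j) = (\<Sum>k\<in>UNIV. u$i * R$i$k * c k)" .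
  qed
  also have "\<dots> = (\<Sum>i\<in>S. \<Sum>k\<in>S. u$i * R$i$k * c k) + (\<Sum>i\<in>S. \<Sum>k\<in>-S. u$i * R$i$k * c k)"
  proof -
    have "(\<Sum>k\<in>UNIV. f k) = (\<Sum>k\<in>S. f k) + (\<Sum>k\<in>-S. f k)" for f :: "'n \<Rightarrow> real"
      using sum.union_disjoint[of S "-S" f] by (simp add: Compl_partition)
    thus ?thesis by (simp add: sum.distrib)
  qed
  also have "\<dots> \<le> ?N B + ?N R"
  proof (rule add_mono)
    have "(\<Sum>i\<in>S. \<Sum>k\<in>S. u$i * R$i$k * c k) = (\<Sum>k\<in>S. \<Sum>i\<in>S. u$i * R$i$k * c k)"
      by (rule sum.swap)
    also have "\<dots> \<le> (\<Sum>k\<in>S. \<Sum>i\<in>UNIV. u$i * R$i$k * c k)"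
      by (intro sum_mono sum_mono2) (auto simp: u0 R0 c0)
    also have "\<dots> = (\<Sum>k\<in>S. u$k * c k)"
    proof (rule sum.cong[OF refl])
      fix k
      have "(\<Sum>i\<in>UNIV. u$i * R$i$k * c k) = (\<Sum>i\<in>UNIV. u$i * R$i$k) * c k"
        by (rule sum_distrib_right[symmetric])
      thus "(\<Sum>i\<in>UNIV. u$i * R$i$k * c k) = u$k * c k" by (simp only: uR)
    qed
    also have "\<dots> = ?N B"
      by (simp add: c_def sum_distrib_left mult.assoc)
    finally show "(\<Sum>i\<in>S. \<Sum>k\<in>S. u$i * R$i$k * c k) \<le> ?N B" .
    show "(\<Sum>i\<in>S. \<Sum>k\<in>-S. u$i * R$i$k * c k) \<le> ?N R"
      by (intro sum_mono mult_left_mono) (auto simp: cv u0 R0)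
  qed
  finally have "?N (R ** B) \<le> ?N R + ?N B" by linarith
  thus ?thesis
    unfolding phiM[OF RBv] phiM[OF assms(5)] phiM[OF assms(7)] add_divide_distrib[symmetric]
    by (rule divide_right_mono[OF _ less_imp_le[OF apos]])
qed

end
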